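(* Let $p_1,p_2,p_3\in\mathbb C$ be non-collinear with $|p_1-p_3|=1$, $|p_2-p_1|\le1$, $|p_2-p_3|\le1$, and let $\delta>0$ be twice the area of the triangle with vertices $p_1,p_2,p_3$. Write $p_j=re^{i\theta_j}$ with a common $r>0$ (the circumradius, after translating the circumcenter to $0$). For $\theta\in\mathbb R$ let $c_j(\theta)=r\cos(\theta_j-\theta)$. On any open interval of $\theta$ on which the labeling satisfies $c_1(\theta)\le c_2(\theta)\le c_3(\theta)$ (after a fixed permutation of indices), the function $t(\theta)=\frac{c_2(\theta)-c_1(\theta)}{c_3(\theta)-c_1(\theta)}$ is differentiable and satisfies $$\delta\le\Big|\frac{dt}{d\theta}\Big|\le\delta^{-1}.$$ *)

theory Defs
  imports "HOL-Analysis.Analysis"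
begin

definition twice_area :: "complex \<Rightarrow> complex \<Rightarrow> complex \<Rightarrow> real" where
  "twice_area a b c = \<bar>Im (cnj (b - a) * (c - a))\<bar>"

definition cproj :: "real \<Rightarrow> (nat \<Rightarrow> real) \<Rightarrow> nat \<Rightarrow> real \<Rightarrow> real" where
  "cproj r th j \<theta> = r * cos (th j - \<theta>)"

end

theory Submission
  imports Defs
begin

lemma noncol_area:
  fixes a b c :: complex
  assumes "\<not> collinear {a,b,c}"
  shows "Im (cnj (b - a) * (c - a)) \<noteq> 0"
proof
  assume h: "Im (cnj (b - a) * (c - a)) = 0"
  have "collinear {0, b - a, c - a}"
  proof (cases "b - a = 0")
    case True then show ?thesis by (simp add: collinear_lemma)
  next
    case False
    define k where "k = Re (cnj (b - a) * (c - a)) / (Re (b-a)^2 + Im (b-a)^2)"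
    have nz: "Re (b-a)^2 + Im (b-a)^2 \<noteq> 0" using False
      by (simp add: complex_eq_iff)
    have r: "x = (x1 * x + y1 * y) / (x1^2 + y1^2) * x1 \<and> y = (x1 * x + y1 * y) / (x1^2 + y1^2) * y1"
      if "x1 * y - y1 * x = 0" "x1^2 + y1^2 \<noteq> 0" for x y x1 y1 :: real
    proof -
      have "x * (x1^2 + y1^2) = (x1 * x + y1 * y) * x1" "y * (x1^2 + y1^2) = (x1 * x + y1 * y) * y1"
        using that(1) by (auto simp: algebra_simps power2_eq_square)
      then show ?thesis using that(2) by (simp add: field_simps)
    qed
    obtain w z where wz: "w = b - a" "z = c - a" by blast
    have h': "Re w * Im z - Im w * Re z = 0" using h unfolding wz by (simp add: algebra_simps)
    have "Re z = k * Re w \<and> Im z = k * Im w"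
      using r[OF h' ] nz unfolding k_def wz[symmetric] by simp
    then have "z = k *\<^sub>R w" by (simp add: complex_eq_iff)
    then have "c - a = k *\<^sub>R (b - a)" using wz by simp
    then show ?thesis by (auto simp add: collinear_lemma)
  qed
  then have "collinear {b, a, c}" using collinear_3[of b a c] by simp
  then show False using assms by (simp add: insert_commute)
qed

lemma deriv_core:
  fixes u v w z t :: real
  assumes "w * cos t + z * sin t \<noteq> 0"
  shows "((\<lambda>x. (u * cos x + v * sin x)/(w * cos x+z * sin x)) has_real_derivative (v * w - u * z)/(w * cos t+z * sin t)^2) (at t)"
proof -
  have e: "((-u * sin t + v * cos t) * (w * cos t+z * sin t) - (u * cos t+v * sin t) * (-w * sin t+z * cos t)) = v * w - u * z"
  proof -
    show ?thesis using sin_cos_squared_add[of t] by algebra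
  qed
  show ?thesis
    apply (rule DERIV_cong)
     apply (rule derivative_eq_intros refl | rule assms)+
    using assms e by (simp add: power2_eq_square algebra_simps)
qed

lemma cs_bound:
  fixes u v c s :: real
  assumes "c^2 + s^2 = 1"
  shows "\<bar>u * c + v * s\<bar> \<le> sqrt (u^2+v^2)"
proof -
  have "(u * c+v * s)^2 \<le> (u^2+v^2) * (c^2+s^2)"
    using zero_le_power2[of "u * s - v * c"]
    by (simp add: power2_eq_square algebra_simps)
  (* (uc+vs)^2 + (us - vc)^2 = (u^2+v^2)(c^2+s^2) *)
  then have "(u * c+v * s)^2 \<le> u^2+v^2" using assms by simp
  then show ?thesis using real_le_rsqrt by (metis real_sqrt_abs real_sqrt_le_mono)
qed


lemma width:
  fixes u v w z c s :: real
  assumes cs: "c^2 + s^2 = 1" and h1: "u^2 + v^2 \<le> 1" and h2: "w^2 + z^2 \<le> 1"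
    and h3: "(w-u)^2 + (z-v)^2 \<le> 1" and o1: "0 \<le> u * c + v * s" and o2: "u * c + v * s \<le> w * c + z * s"
  shows "\<bar>u * z - v * w\<bar> \<le> w * c + z * s" and "w * c + z * s \<le> 1"
proof -
  define a where "a = u * c + v * s"
  define D where "D = w * c + z * s"
  define a2 where "a2 = (-u) * s + v * c"
  define b2 where "b2 = (-(w-u)) * s + (z-v) * c"
  have sc: "s^2 + c^2 = 1" using cs by simp
  have "\<bar>a2\<bar> \<le> sqrt ((-u)^2 + v^2)" unfolding a2_def by (rule cs_bound[OF sc])
  also have "\<dots> \<le> 1" using h1 by simp
  finally have A2: "\<bar>a2\<bar> \<le> 1" .
  have "\<bar>b2\<bar> \<le> sqrt ((-(w-u))^2 + (z-v)^2)" unfolding b2_def by (rule cs_bound[OF sc])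
  also have "\<dots> \<le> 1" using h3 by (simp add: power2_commute[of u w])
  finally have B2: "\<bar>b2\<bar> \<le> 1" .
  have "\<bar>D\<bar> \<le> sqrt (w^2 + z^2)" unfolding D_def by (rule cs_bound[OF cs])
  also have "\<dots> \<le> 1" using h2 by simp
  finally show "w * c + z * s \<le> 1" unfolding D_def by simp
  have id: "u * z - v * w = a * b2 - (D - a) * a2"
    unfolding a_def b2_def D_def a2_def using cs by algebra
  have a0: "0 \<le> a" "a \<le> D" using o1 o2 a_def D_def by auto
  have "\<bar>a * b2\<bar> \<le> a" using a0 B2 by (simp add: abs_mult mult_left_le)
  moreover have "\<bar>(D - a) * a2\<bar> \<le> D - a" using a0 A2 by (simp add: abs_mult mult_left_le)
  ultimately have "\<bar>a * b2 - (D - a) * a2\<bar> \<le> D" by linarith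
  then show "\<bar>u * z - v * w\<bar> \<le> w * c + z * s" using id D_def by simp
qed

theorem mainTheorem14:
  fixes p :: "nat \<Rightarrow> complex" and th :: "nat \<Rightarrow> real" and r \<delta> :: real
    and \<sigma> :: "nat \<Rightarrow> nat" and I :: "real set"
  assumes noncol: "\<not> collinear {p 1, p 2, p 3}"
    and d13: "cmod (p 1 - p 3) = 1"
    and d21: "cmod (p 2 - p 1) \<le> 1"
    and d23: "cmod (p 2 - p 3) \<le> 1"
    and delta: "\<delta> = twice_area (p 1) (p 2) (p 3)"
    and r_pos: "r > 0"
    and polar: "\<And>j. j \<in> {1, 2, 3} \<Longrightarrow> p j = complex_of_real r * exp (\<i> * complex_of_real (th j))"
    and perm: "\<sigma> permutes {1, 2, 3}"
    and I_open: "open I" and I_int: "is_interval I"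
    and order: "\<And>\<theta>. \<theta> \<in> I \<Longrightarrow>
                 cproj r th (\<sigma> 1) \<theta> \<le> cproj r th (\<sigma> 2) \<theta> \<and>
                 cproj r th (\<sigma> 2) \<theta> \<le> cproj r th (\<sigma> 3) \<theta>"
  shows "\<forall>\<theta>\<in>I.
           (\<lambda>x. (cproj r th (\<sigma> 2) x - cproj r th (\<sigma> 1) x) /
                 (cproj r th (\<sigma> 3) x - cproj r th (\<sigma> 1) x)) differentiable (at \<theta>) \<and>
           \<delta> \<le> \<bar>deriv (\<lambda>x. (cproj r th (\<sigma> 2) x - cproj r th (\<sigma> 1) x) /
                 (cproj r th (\<sigma> 3) x - cproj r th (\<sigma> 1) x)) \<theta>\<bar> \<and>
           \<bar>deriv (\<lambda>x. (cproj r th (\<sigma> 2) x - cproj r th (\<sigma> 1) x) /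
                 (cproj r th (\<sigma> 3) x - cproj r th (\<sigma> 1) x)) \<theta>\<bar> \<le> inverse \<delta>"
proof -
  have cp: "cproj r th j x = Re (p j) * cos x + Im (p j) * sin x" if "j \<in> {1,2,3}" for j x
  proof -
    have "p j = complex_of_real r * cis (th j)" using polar[OF that] by (simp add: cis_conv_exp)
    then have "Re (p j) = r * cos (th j)" "Im (p j) = r * sin (th j)" by simp_all
    then show ?thesis unfolding cproj_def by (simp add: cos_diff algebra_simps)
  qed
  have s123: "\<sigma> 1 \<in> {1,2,3}" "\<sigma> 2 \<in> {1,2,3}" "\<sigma> 3 \<in> {1,2,3}"
    using permutes_in_image[OF perm] by auto
  have inj: "inj \<sigma>" using permutes_inj[OF perm] .
  have ii: "i = j" if "\<sigma> i = \<sigma> j" for i j using inj that by (rule injD)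
  have dist: "\<sigma> 1 \<noteq> \<sigma> 2" "\<sigma> 1 \<noteq> \<sigma> 3" "\<sigma> 2 \<noteq> \<sigma> 3"
    using ii[of 1 2] ii[of 1 3] ii[of 2 3] by auto
  have dall: "cmod (p j - p k) \<le> 1" if "j \<in> {1,2,3}" "k \<in> {1,2,3}" for j k
    using that d13 d21 d23 by (auto simp: norm_minus_commute)
  have sq: "(Re (p j) - Re (p k))^2 + (Im (p j) - Im (p k))^2 \<le> 1" if "j \<in> {1,2,3}" "k \<in> {1,2,3}" for j k
  proof -
    have "(Re (p j) - Re (p k))^2 + (Im (p j) - Im (p k))^2 = (cmod (p j - p k))^2"
      by (simp add: cmod_power2)
    also have "\<dots> \<le> 1" using dall[OF that] by (simp add: power_le_one)
    finally show ?thesis .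
  qed
  define u where "u = Re (p (\<sigma> 2)) - Re (p (\<sigma> 1))"
  define v where "v = Im (p (\<sigma> 2)) - Im (p (\<sigma> 1))"
  define w where "w = Re (p (\<sigma> 3)) - Re (p (\<sigma> 1))"
  define z where "z = Im (p (\<sigma> 3)) - Im (p (\<sigma> 1))"
  have uv: "u^2 + v^2 \<le> 1" unfolding u_def v_def using sq s123 by blast
  have wz: "w^2 + z^2 \<le> 1" unfolding w_def z_def using sq s123 by blast
  have wuzv: "(w-u)^2 + (z-v)^2 \<le> 1"
  proof -
    have "(w-u)^2 + (z-v)^2 = (Re (p (\<sigma> 3)) - Re (p (\<sigma> 2)))^2 + (Im (p (\<sigma> 3)) - Im (p (\<sigma> 2)))^2"
      unfolding u_def v_def w_def z_def by (simp add: algebra_simps)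
    then show ?thesis using sq s123 by simp
  qed
  have crossdef: "u * z - v * w = Im (cnj (p (\<sigma> 2) - p (\<sigma> 1)) * (p (\<sigma> 3) - p (\<sigma> 1)))"
    unfolding u_def v_def w_def z_def by (simp add: algebra_simps)
  have cases6: "(\<sigma> 1 = 1 \<and> \<sigma> 2 = 2 \<and> \<sigma> 3 = 3) \<or> (\<sigma> 1 = 1 \<and> \<sigma> 2 = 3 \<and> \<sigma> 3 = 2) \<or>
     (\<sigma> 1 = 2 \<and> \<sigma> 2 = 1 \<and> \<sigma> 3 = 3) \<or> (\<sigma> 1 = 2 \<and> \<sigma> 2 = 3 \<and> \<sigma> 3 = 1) \<or>
     (\<sigma> 1 = 3 \<and> \<sigma> 2 = 1 \<and> \<sigma> 3 = 2) \<or> (\<sigma> 1 = 3 \<and> \<sigma> 2 = 2 \<and> \<sigma> 3 = 1)"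
    using s123 dist by auto
  have cross: "\<bar>u * z - v * w\<bar> = \<delta>"
  proof -
    define K where "K = (Re (p 2) - Re (p 1)) * (Im (p 3) - Im (p 1)) - (Im (p 2) - Im (p 1)) * (Re (p 3) - Re (p 1))"
    have dK: "\<delta> = \<bar>K\<bar>" unfolding delta twice_area_def K_def by (simp add: algebra_simps)
    have "u * z - v * w = K \<or> u * z - v * w = - K"
      using cases6 unfolding u_def v_def w_def z_def K_def
      by (elim disjE; simp only:; simp add: algebra_simps)
    then show ?thesis using dK by auto
  qed
  have dpos: "\<delta> > 0" using noncol_area[OF noncol] delta twice_area_def by simp
  have feq: "(\<lambda>x. (cproj r th (\<sigma> 2) x - cproj r th (\<sigma> 1) x) /
                 (cproj r th (\<sigma> 3) x - cproj r th (\<sigma> 1) x)) =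
             (\<lambda>x. (u * cos x + v * sin x) / (w * cos x + z * sin x))"
    unfolding u_def v_def w_def z_def using s123 by (simp add: cp algebra_simps)
  show ?thesis
  proof
    fix t assume tI: "t \<in> I"
    have o: "0 \<le> u * cos t + v * sin t" "u * cos t + v * sin t \<le> w * cos t + z * sin t"
      using order[OF tI] s123 unfolding u_def v_def w_def z_def by (auto simp: cp algebra_simps)
    have cs: "(cos t)^2 + (sin t)^2 = 1" by simp
    note W = width[OF cs uv wz wuzv o]
    define D where "D = w * cos t + z * sin t"
    have Dd: "\<delta> \<le> D" "D \<le> 1" using W cross D_def by auto
    have Dpos: "D > 0" using Dd dpos by linarith
    have der: "((\<lambda>x. (u * cos x + v * sin x) / (w * cos x + z * sin x)) has_real_derivative (v * w - u * z) / D^2) (at t)"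
      unfolding D_def by (rule deriv_core) (use Dpos D_def in simp)
    have dv: "deriv (\<lambda>x. (u * cos x + v * sin x) / (w * cos x + z * sin x)) t = (v * w - u * z) / D^2"
      using DERIV_imp_deriv[OF der] .
    have ab: "\<bar>(v * w - u * z) / D^2\<bar> = \<delta> / D^2"
      using cross by (simp add: abs_minus_commute)
    have D2: "\<delta>^2 \<le> D^2" "D^2 \<le> 1" "D^2 > 0" using Dd Dpos dpos
      by (auto intro: power_mono simp: power_le_one)
    have l1: "\<delta> \<le> \<delta> / D^2"
      using D2 dpos by (simp add: le_divide_eq)
    have l2: "\<delta> / D^2 \<le> inverse \<delta>"
    proof -
      have "\<delta> / D^2 \<le> \<delta> / \<delta>^2" using D2 dpos
        by (intro divide_left_mono) auto
      also have "\<dots> = inverse \<delta>" using dpos by (simp add: power2_eq_square field_simps)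
      finally show ?thesis .
    qed
    show "(\<lambda>x. (cproj r th (\<sigma> 2) x - cproj r th (\<sigma> 1) x) /
                 (cproj r th (\<sigma> 3) x - cproj r th (\<sigma> 1) x)) differentiable (at t) \<and>
           \<delta> \<le> \<bar>deriv (\<lambda>x. (cproj r th (\<sigma> 2) x - cproj r th (\<sigma> 1) x) /
                 (cproj r th (\<sigma> 3) x - cproj r th (\<sigma> 1) x)) t\<bar> \<and>
           \<bar>deriv (\<lambda>x. (cproj r th (\<sigma> 2) x - cproj r th (\<sigma> 1) x) /
                 (cproj r th (\<sigma> 3) x - cproj r th (\<sigma> 1) x)) t\<bar> \<le> inverse \<delta>"
    proof -
      have dif: "(\<lambda>x. (u * cos x + v * sin x) / (w * cos x + z * sin x)) differentiable (at t)"
        using der unfolding has_field_derivative_def by (rule differentiableI)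
      show ?thesis unfolding feq dv ab using l1 l2 dif by simp
    qed
  qed
qed

end
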